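(* Let $k$ be a number field, $v$ an archimedean place of $k$, $\lambda$ a partition with $t\le n$ parts, and $g\in\mathrm{GL}_n(k)$, viewed in $\mathrm{GL}_n(k_v)$ via $v$. Then $$H_v\big(\pi_\lambda(g)e_{U(\lambda)}\big)=\Big(\Delta_{\lambda^*_1}(g^*g)\,\Delta_{\lambda^*_2}(g^*g)\cdots\Delta_{\lambda^*_s}(g^*g)\Big)^{d_v/2}\,H_v\big(e_{U(\lambda)}\big),$$ where $g^*$ is the transpose of $g$ if $k_v=\mathbb{R}$ and its conjugate transpose if $k_v=\mathbb{C}$, and $\Delta_\ell$ denotes the leading principal $\ell\times\ell$ minor.
   Context: $k_v$ is the completion of $k$ at $v$ ($\mathbb{R}$ or $\mathbb{C}$) and $d_v=[k_v:\mathbb{R}]$. A partition $\lambda=(\lambda_1\ge\dots\ge\lambda_t>0)$ has $s=\lambda_1$ columns of heights $\lambda^*_\ell=\#\{i:\lambda_i\ge\ell\}$. Let $Z=(z_{a,i})_{1\le a\le t,1\le i\le n}$ be indeterminates. For $y_1,\dots,y_p\in k_v^n$ let $\Delta(y_1,\dots,y_p)=\det((Zy_b)_a)_{1\le a,b\le p}$, $(Zy)_a=\sum_i z_{a,i}(y)_i$; for a family $Y=(y_{\ell,b})_{1\le\ell\le s,1\le b\le\lambda^*_\ell}$ put $\phi_Y=\prod_\ell\Delta(y_{\ell,1},\dots,y_{\ell,\lambda^*_\ell})$. The Schur module $\mathbb{S}^\lambda(k_v^n)$ is the span of the $\phi_Y$ in $k_v[Z]$, with action $(\pi_\lambda(g)P)(Z)=P(Zg)$.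 The highest weight vector is $e_{U(\lambda)}=\prod_{\ell=1}^s\det(z_{a,b})_{1\le a,b\le\lambda^*_\ell}$. On $k_v[Z]$ consider the inner product (Hermitian if $k_v=\mathbb{C}$) making distinct monomials orthogonal with $\langle\prod z_{a,i}^{\alpha_{a,i}},\prod z_{a,i}^{\alpha_{a,i}}\rangle=\prod\alpha_{a,i}!$, and set $H_v(X)=\frac{\dim\mathbb{S}^\lambda(k^n)}{n!}\langle X,X\rangle^{d_v/2}$ for $X\in\mathbb{S}^\lambda(k_v^n)$. *)

theory Defs
  imports "HOL-Analysis.Analysis" "HOL-Library.Poly_Mapping" "HOL-Combinatorics.Permutations"
begin

section \<open>Number fields embedded in C (the archimedean place v)\<close>

definition is_number_field :: "complex set \<Rightarrow> bool" where
  "is_number_field K \<longleftrightarrow>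
     0 \<in> K \<and> 1 \<in> K \<and>
     (\<forall>x\<in>K. \<forall>y\<in>K. x + y \<in> K \<and> x - y \<in> K \<and> x * y \<in> K) \<and>
     (\<forall>x\<in>K. inverse x \<in> K) \<and>
     (\<exists>B. finite B \<and> B \<subseteq> K \<and> (\<forall>x\<in>K. \<exists>c. x = (\<Sum>b\<in>B. of_rat (c b) * b)))"

text \<open>For the place v given by the embedding K \<subseteq> C: k_v = R iff K \<subseteq> R, d_v = [k_v : R].\<close>
definition place_degree :: "complex set \<Rightarrow> nat" where
  "place_degree K = (if K \<subseteq> \<real> then 1 else 2)"

section \<open>Polynomials in the indeterminates z_{a,i} (0-based indices)\<close>

type_synonym cpoly = "((nat \<times> nat) \<Rightarrow>\<^sub>0 nat) \<Rightarrow>\<^sub>0 complex"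

definition Var :: "nat \<Rightarrow> nat \<Rightarrow> cpoly" where
  "Var a i = Poly_Mapping.single (Poly_Mapping.single (a, i) 1) 1"

definition Const :: "complex \<Rightarrow> cpoly" where
  "Const c = Poly_Mapping.single 0 c"

definition ldet :: "nat \<Rightarrow> (nat \<Rightarrow> nat \<Rightarrow> 'r::comm_ring_1) \<Rightarrow> 'r" where
  "ldet p M = (\<Sum>\<sigma> \<in> {\<sigma>. \<sigma> permutes {0..<p}}. of_int (sign \<sigma>) * (\<Prod>a<p. M a (\<sigma> a)))"

definition subst :: "(nat \<times> nat \<Rightarrow> cpoly) \<Rightarrow> cpoly \<Rightarrow> cpoly" where
  "subst \<tau> P = sum (\<lambda>\<alpha>. Const (Poly_Mapping.lookup P \<alpha>) * prod (\<lambda>x. \<tau> x ^ Poly_Mapping.lookup \<alpha> x) (Poly_Mapping.keys \<alpha>)) (Poly_Mapping.keys P)"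

text \<open>(\<pi>(g) P)(Z) = P(Z g), g an n x n matrix.\<close>
definition pi_act :: "nat \<Rightarrow> (nat \<Rightarrow> nat \<Rightarrow> complex) \<Rightarrow> cpoly \<Rightarrow> cpoly" where
  "pi_act n g P = subst (\<lambda>(a, j). \<Sum>i<n. Var a i * Const (g i j)) P"

text \<open>Inner product: distinct monomials orthogonal, <z^\<alpha>, z^\<alpha>> = \<Prod> \<alpha>_{a,i}!.\<close>
definition norm_sq :: "cpoly \<Rightarrow> real" where
  "norm_sq P = sum (\<lambda>\<alpha>. (cmod (Poly_Mapping.lookup P \<alpha>))\<^sup>2 * prod (\<lambda>x. fact (Poly_Mapping.lookup \<alpha> x)) (Poly_Mapping.keys \<alpha>)) (Poly_Mapping.keys P)"

text \<open>A partition \<lambda> = (\<lambda>_1 \<ge> ... \<ge> \<lambda>_t > 0) as a list; t = length.\<close>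
definition is_partition :: "nat list \<Rightarrow> bool" where
  "is_partition lam \<longleftrightarrow> sorted_wrt (\<ge>) lam \<and> (\<forall>x\<in>set lam. 0 < x)"

definition ncols :: "nat list \<Rightarrow> nat" where
  "ncols lam = (if lam = [] then 0 else hd lam)"

definition colh :: "nat list \<Rightarrow> nat \<Rightarrow> nat" where
  "colh lam l = card {i. i < length lam \<and> l \<le> lam ! i}"

definition Zvec :: "nat \<Rightarrow> (nat \<Rightarrow> complex) \<Rightarrow> nat \<Rightarrow> cpoly" where
  "Zvec n y a = (\<Sum>i<n. Var a i * Const (y i))"

definition Delta :: "nat \<Rightarrow> nat \<Rightarrow> (nat \<Rightarrow> nat \<Rightarrow> complex) \<Rightarrow> cpoly" where
  "Delta n p y = ldet p (\<lambda>a b. Zvec n (y b) a)"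

text \<open>\<phi>_Y for Y = (y_{l,b}), y_{l,b} \<in> C^n (vectors = functions on {0..<n}).\<close>
definition phiY :: "nat \<Rightarrow> nat list \<Rightarrow> (nat \<Rightarrow> nat \<Rightarrow> nat \<Rightarrow> complex) \<Rightarrow> cpoly" where
  "phiY n lam Y = (\<Prod>l\<in>{1..ncols lam}. Delta n (colh lam l) (Y l))"

definition schur_gens :: "nat \<Rightarrow> nat list \<Rightarrow> cpoly set" where
  "schur_gens n lam = {phiY n lam Y | Y. True}"

definition cscale :: "complex \<Rightarrow> cpoly \<Rightarrow> cpoly" where
  "cscale c P = Const c * P"

text \<open>dim S^\<lambda>(k^n): dimension of the span of the \<phi>_Y (computed over C; the dimension
  of the Schur module does not depend on the field of characteristic 0).\<close>
definition schur_dim :: "nat \<Rightarrow> nat list \<Rightarrow> nat" where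
  "schur_dim n lam = vector_space.dim cscale (schur_gens n lam)"

definition e_U :: "nat list \<Rightarrow> cpoly" where
  "e_U lam = (\<Prod>l\<in>{1..ncols lam}. ldet (colh lam l) (\<lambda>a b. Var a b))"

definition H_v :: "nat \<Rightarrow> nat list \<Rightarrow> nat \<Rightarrow> cpoly \<Rightarrow> real" where
  "H_v n lam d X = real (schur_dim n lam) / fact n * norm_sq X powr (real d / 2)"

text \<open>g^* g (conjugate transpose; equals transpose for real g), and leading minors.\<close>
definition gstar_g :: "nat \<Rightarrow> (nat \<Rightarrow> nat \<Rightarrow> complex) \<Rightarrow> nat \<Rightarrow> nat \<Rightarrow> complex" where
  "gstar_g n g i j = (\<Sum>k<n. cnj (g k i) * g k j)"

definition lead_minor :: "nat \<Rightarrow> (nat \<Rightarrow> nat \<Rightarrow> complex) \<Rightarrow> complex" where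
  "lead_minor l M = ldet l M"

end

theory Submission
  imports Defs "Jordan_Normal_Form.Determinant"
begin


type_synonym mon = "(nat \<times> nat) \<Rightarrow>\<^sub>0 nat"

lemma Const_add: "Const (a + b) = Const a + Const b" by (simp add: Const_def single_add)
lemma Const_mult: "Const (a * b) = Const a * Const b" by (simp add: Const_def mult_single)
lemma Const_0[simp]: "Const 0 = 0" by (simp add: Const_def)
lemma Const_1[simp]: "Const 1 = 1" by (simp add: Const_def)
lemma Const_sum: "Const (sum f A) = (\<Sum>x\<in>A. Const (f x))"
  by (induct A rule: infinite_finite_induct) (simp_all add: Const_add)
lemma Const_prod: "Const (prod f A) = (\<Prod>x\<in>A. Const (f x))"
  by (induct A rule: infinite_finite_induct) (simp_all add: Const_mult)
lemma Const_of_int: "Const (of_int k) = of_int k" by (simp add: Const_def)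

lemma lookup_sum_single:
  assumes "finite A"
  shows "Poly_Mapping.lookup (\<Sum>\<alpha>\<in>A. Poly_Mapping.single \<alpha> (f \<alpha>)) \<beta> = (if \<beta> \<in> A then f \<beta> else 0)"
  using assms by (simp add: lookup_sum lookup_single when_def)

lemma poly_expand: "P = (\<Sum>\<alpha>\<in>Poly_Mapping.keys P. Poly_Mapping.single \<alpha> (Poly_Mapping.lookup P \<alpha>))"
  by (rule poly_mapping_eqI) (simp add: lookup_sum_single in_keys_iff)

lemma sum_keys_superset:
  assumes "finite S" "Poly_Mapping.keys P \<subseteq> S" "\<And>\<alpha>. f \<alpha> 0 = 0"
  shows "(\<Sum>\<alpha>\<in>Poly_Mapping.keys P. f \<alpha> (Poly_Mapping.lookup P \<alpha>)) = (\<Sum>\<alpha>\<in>S. f \<alpha> (Poly_Mapping.lookup P \<alpha>))"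
  using assms by (intro sum.mono_neutral_left) (auto simp: in_keys_iff)

lemma Const_mult_expand:
  "Const c * P = (\<Sum>\<alpha>\<in>Poly_Mapping.keys P. Poly_Mapping.single \<alpha> (c * Poly_Mapping.lookup P \<alpha>))"
proof -
  have "Const c * P = Const c * (\<Sum>\<alpha>\<in>Poly_Mapping.keys P. Poly_Mapping.single \<alpha> (Poly_Mapping.lookup P \<alpha>))"
    by (subst poly_expand[of P]) simp
  also have "\<dots> = (\<Sum>\<alpha>\<in>Poly_Mapping.keys P. Poly_Mapping.single \<alpha> (c * Poly_Mapping.lookup P \<alpha>))"
    by (simp add: sum_distrib_left Const_def mult_single)
  finally show ?thesis .
qed

lemma lookup_Const_mult: "Poly_Mapping.lookup (Const c * P) \<alpha> = c * Poly_Mapping.lookup P \<alpha>"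
  by (simp add: Const_mult_expand lookup_sum_single in_keys_iff)

definition monom :: "(nat \<times> nat \<Rightarrow> cpoly) \<Rightarrow> mon \<Rightarrow> cpoly" where
  "monom \<tau> \<alpha> = (\<Prod>x\<in>Poly_Mapping.keys \<alpha>. \<tau> x ^ Poly_Mapping.lookup \<alpha> x)"

lemma monom_superset:
  assumes "finite S" "Poly_Mapping.keys \<alpha> \<subseteq> S"
  shows "monom \<tau> \<alpha> = (\<Prod>x\<in>S. \<tau> x ^ Poly_Mapping.lookup \<alpha> x)"
  unfolding monom_def using assms by (intro prod.mono_neutral_left) (auto simp: in_keys_iff)

lemma keys_add_nat: "Poly_Mapping.keys ((\<alpha>::'a \<Rightarrow>\<^sub>0 nat) + \<beta>) = Poly_Mapping.keys \<alpha> \<union> Poly_Mapping.keys \<beta>"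
  by (auto simp: in_keys_iff lookup_add)

lemma monom_add: "monom \<tau> (\<alpha> + \<beta>) = monom \<tau> \<alpha> * monom \<tau> \<beta>"
proof -
  let ?S = "Poly_Mapping.keys \<alpha> \<union> Poly_Mapping.keys \<beta>"
  have "monom \<tau> (\<alpha> + \<beta>) = (\<Prod>x\<in>?S. \<tau> x ^ Poly_Mapping.lookup (\<alpha>+\<beta>) x)"
    by (rule monom_superset) (auto simp: keys_add_nat)
  also have "\<dots> = (\<Prod>x\<in>?S. \<tau> x ^ Poly_Mapping.lookup \<alpha> x) * (\<Prod>x\<in>?S. \<tau> x ^ Poly_Mapping.lookup \<beta> x)"
    by (simp add: lookup_add power_add prod.distrib)
  also have "\<dots> = monom \<tau> \<alpha> * monom \<tau> \<beta>"
    by (subst (1 2) monom_superset[where S = ?S]) auto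
  finally show ?thesis .
qed

lemma monom_0[simp]: "monom \<tau> 0 = 1" by (simp add: monom_def)
lemma monom_single: "monom \<tau> (Poly_Mapping.single x 1) = \<tau> x" by (simp add: monom_def)

lemma subst_alt: "subst \<tau> P = (\<Sum>\<alpha>\<in>Poly_Mapping.keys P. Const (Poly_Mapping.lookup P \<alpha>) * monom \<tau> \<alpha>)"
  by (simp add: subst_def monom_def)

lemma subst_superset:
  assumes "finite S" "Poly_Mapping.keys P \<subseteq> S"
  shows "subst \<tau> P = (\<Sum>\<alpha>\<in>S. Const (Poly_Mapping.lookup P \<alpha>) * monom \<tau> \<alpha>)"
  unfolding subst_alt by (rule sum_keys_superset[OF assms]) simp

lemma subst_add: "subst \<tau> (P + Q) = subst \<tau> P + subst \<tau> Q"
proof -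
  let ?S = "Poly_Mapping.keys P \<union> Poly_Mapping.keys Q"
  have k: "Poly_Mapping.keys (P + Q) \<subseteq> ?S" by (rule keys_add)
  show ?thesis
    by (subst (1 2 3) subst_superset[where S = ?S])
       (auto simp: k lookup_add Const_add distrib_right sum.distrib)
qed

lemma subst_0[simp]: "subst \<tau> 0 = 0" by (simp add: subst_def)

lemma subst_sum: "subst \<tau> (sum f A) = (\<Sum>x\<in>A. subst \<tau> (f x))"
  by (induct A rule: infinite_finite_induct) (simp_all add: subst_add)

lemma subst_single: "subst \<tau> (Poly_Mapping.single \<alpha> c) = Const c * monom \<tau> \<alpha>"
  by (simp add: subst_alt)

lemma mult_expand:
  "P * Q = (\<Sum>\<alpha>\<in>Poly_Mapping.keys P. \<Sum>\<beta>\<in>Poly_Mapping.keys Q.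
      Poly_Mapping.single (\<alpha> + \<beta>) (Poly_Mapping.lookup P \<alpha> * Poly_Mapping.lookup Q \<beta>))"
proof -
  have "P * Q = (\<Sum>\<alpha>\<in>Poly_Mapping.keys P. Poly_Mapping.single \<alpha> (Poly_Mapping.lookup P \<alpha>)) *
     (\<Sum>\<beta>\<in>Poly_Mapping.keys Q. Poly_Mapping.single \<beta> (Poly_Mapping.lookup Q \<beta>))"
    by (subst (1) poly_expand[of P], subst (1) poly_expand[of Q]) simp
  also have "\<dots> = (\<Sum>\<alpha>\<in>Poly_Mapping.keys P. \<Sum>\<beta>\<in>Poly_Mapping.keys Q.
      Poly_Mapping.single (\<alpha> + \<beta>) (Poly_Mapping.lookup P \<alpha> * Poly_Mapping.lookup Q \<beta>))" by (simp add: sum_product mult_single)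
  finally show ?thesis .
qed

lemma subst_mult: "subst \<tau> (P * Q) = subst \<tau> P * subst \<tau> Q"
proof -
  have "subst \<tau> (P * Q) = (\<Sum>\<alpha>\<in>Poly_Mapping.keys P. \<Sum>\<beta>\<in>Poly_Mapping.keys Q.
      (Const (Poly_Mapping.lookup P \<alpha>) * monom \<tau> \<alpha>) * (Const (Poly_Mapping.lookup Q \<beta>) * monom \<tau> \<beta>))"
    by (subst mult_expand) (simp add: subst_sum subst_single monom_add Const_mult ac_simps)
  also have "\<dots> = subst \<tau> P * subst \<tau> Q"
    by (simp add: subst_alt sum_product)
  finally show ?thesis .
qed

lemma subst_Const[simp]: "subst \<tau> (Const c) = Const c"
  by (simp add: Const_def subst_single)

lemma subst_1[simp]: "subst \<tau> 1 = 1"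
  using subst_Const[of \<tau> 1] by simp

lemma subst_prod: "subst \<tau> (prod f A) = (\<Prod>x\<in>A. subst \<tau> (f x))"
  by (induct A rule: infinite_finite_induct) (simp_all add: subst_mult)

lemma subst_power: "subst \<tau> (P ^ k) = subst \<tau> P ^ k"
  by (induct k) (simp_all add: subst_mult)

lemma subst_of_int[simp]: "subst \<tau> (of_int k) = of_int k"
  using subst_Const[of \<tau> "of_int k"] by (simp add: Const_of_int)

lemma subst_Var[simp]: "subst \<tau> (Var a i) = \<tau> (a, i)"
  by (simp add: Var_def subst_single monom_def)

lemma subst_ldet: "subst \<tau> (ldet p M) = ldet p (\<lambda>a b. subst \<tau> (M a b))"
  by (simp add: ldet_def subst_sum subst_mult subst_prod)




abbreviation lk :: "('a \<Rightarrow>\<^sub>0 'b::zero) \<Rightarrow> 'a \<Rightarrow> 'b" where "lk \<equiv> Poly_Mapping.lookup"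
abbreviation ks :: "('a \<Rightarrow>\<^sub>0 'b::zero) \<Rightarrow> 'a set" where "ks \<equiv> Poly_Mapping.keys"
abbreviation sg :: "'a \<Rightarrow> 'b \<Rightarrow> ('a \<Rightarrow>\<^sub>0 'b::zero)" where "sg \<equiv> Poly_Mapping.single"

definition ex :: "nat \<times> nat \<Rightarrow> mon" where "ex x = sg x 1"

lemma lookup_ex: "lk (ex x) y = (if x = y then 1 else 0)"
  by (simp add: ex_def lookup_single when_def)

lemma lookup_minus_ex: "lk (\<alpha> - ex x) y = lk \<alpha> y - (if x = y then 1 else 0)"
  by (simp add: lookup_minus lookup_ex)

lemma minus_ex_add: "1 \<le> lk \<alpha> x \<Longrightarrow> (\<alpha> - ex x) + \<beta> = \<alpha> + \<beta> - ex x"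
  by (rule poly_mapping_eqI) (auto simp: lookup_add lookup_minus_ex)

lemma add_minus_ex: "1 \<le> lk \<beta> x \<Longrightarrow> \<alpha> + (\<beta> - ex x) = \<alpha> + \<beta> - ex x"
  by (rule poly_mapping_eqI) (auto simp: lookup_add lookup_minus_ex)

lemma minus_ex_plus: "1 \<le> lk \<alpha> x \<Longrightarrow> (\<alpha> - ex x) + ex x = \<alpha>"
  by (rule poly_mapping_eqI) (auto simp: lookup_add lookup_minus_ex lookup_ex)

lemma minus_ex_inj: "1 \<le> lk \<alpha> x \<Longrightarrow> 1 \<le> lk \<beta> x \<Longrightarrow> \<alpha> - ex x = \<beta> - ex x \<Longrightarrow> \<alpha> = \<beta>"
  by (metis minus_ex_plus)

lemma keys_minus_ex: "ks (\<alpha> - ex x) \<subseteq> ks \<alpha>"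
  by (auto simp: in_keys_iff lookup_minus_ex)

section \<open>Derivative\<close>

definition dz :: "nat \<times> nat \<Rightarrow> cpoly \<Rightarrow> cpoly" where
  "dz x P = (\<Sum>\<alpha>\<in>ks P. sg (\<alpha> - ex x) (of_nat (lk \<alpha> x) * lk P \<alpha>))"

lemma dz_superset:
  assumes "finite S" "ks P \<subseteq> S"
  shows "dz x P = (\<Sum>\<alpha>\<in>S. sg (\<alpha> - ex x) (of_nat (lk \<alpha> x) * lk P \<alpha>))"
  unfolding dz_def by (rule sum_keys_superset[OF assms]) simp

lemma dz_add: "dz x (P + Q) = dz x P + dz x Q"
proof -
  let ?S = "ks P \<union> ks Q"
  have k: "ks (P + Q) \<subseteq> ?S" by (rule keys_add)
  show ?thesis
    by (subst (1 2 3) dz_superset[where S = ?S])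
       (auto simp: k lookup_add distrib_left single_add sum.distrib)
qed

lemma dz_0[simp]: "dz x 0 = 0" by (simp add: dz_def)

lemma dz_sum: "dz x (sum f A) = (\<Sum>i\<in>A. dz x (f i))"
  by (induct A rule: infinite_finite_induct) (simp_all add: dz_add)

lemma dz_single: "dz x (sg \<alpha> c) = sg (\<alpha> - ex x) (of_nat (lk \<alpha> x) * c)"
  by (simp add: dz_def)

lemma single_leibniz:
  "sg (\<alpha> + \<beta> - ex x) (of_nat (lk (\<alpha>+\<beta>) x) * c) =
   sg (\<alpha> - ex x + \<beta>) (of_nat (lk \<alpha> x) * c) + sg (\<alpha> + (\<beta> - ex x)) (of_nat (lk \<beta> x) * c)"
proof (cases "lk \<alpha> x = 0")
  case a: True
  show ?thesis
  proof (cases "lk \<beta> x = 0")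
    case True with a show ?thesis by (simp add: lookup_add)
  next
    case False with a show ?thesis by (simp add: lookup_add add_minus_ex)
  qed
next
  case a: False
  show ?thesis
  proof (cases "lk \<beta> x = 0")
    case True with a show ?thesis by (simp add: lookup_add minus_ex_add)
  next
    case False with a show ?thesis
      by (simp add: lookup_add minus_ex_add add_minus_ex single_add[symmetric] distrib_right)
  qed
qed

lemma dz_mult: "dz x (P * Q) = dz x P * Q + P * dz x Q"
proof -
  have l: "dz x (P * Q) = (\<Sum>\<alpha>\<in>ks P. \<Sum>\<beta>\<in>ks Q.
      sg (\<alpha> - ex x + \<beta>) (of_nat (lk \<alpha> x) * (lk P \<alpha> * lk Q \<beta>)) +
      sg (\<alpha> + (\<beta> - ex x)) (of_nat (lk \<beta> x) * (lk P \<alpha> * lk Q \<beta>)))"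
    by (subst mult_expand) (simp add: dz_sum dz_single single_leibniz)
  have r1: "dz x P * Q = (\<Sum>\<alpha>\<in>ks P. \<Sum>\<beta>\<in>ks Q.
      sg (\<alpha> - ex x + \<beta>) (of_nat (lk \<alpha> x) * (lk P \<alpha> * lk Q \<beta>)))"
  proof -
    have eQ: "(\<Sum>\<beta>\<in>ks Q. sg \<beta> (lk Q \<beta>)) = Q" by (rule poly_expand[symmetric])
    have "dz x P * Q = dz x P * (\<Sum>\<beta>\<in>ks Q. sg \<beta> (lk Q \<beta>))" by (simp only: eQ)
    then show ?thesis by (simp add: dz_def sum_product mult_single mult.assoc mult.left_commute)
  qed
  have r2: "P * dz x Q = (\<Sum>\<alpha>\<in>ks P. \<Sum>\<beta>\<in>ks Q.
      sg (\<alpha> + (\<beta> - ex x)) (of_nat (lk \<beta> x) * (lk P \<alpha> * lk Q \<beta>)))"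
  proof -
    have eP: "(\<Sum>\<beta>\<in>ks P. sg \<beta> (lk P \<beta>)) = P" by (rule poly_expand[symmetric])
    have "P * dz x Q = (\<Sum>\<beta>\<in>ks P. sg \<beta> (lk P \<beta>)) * dz x Q" by (simp only: eP)
    then show ?thesis by (simp add: dz_def sum_product mult_single mult.assoc mult.left_commute)
  qed
  show ?thesis unfolding l r1 r2 by (simp add: sum.distrib)
qed

lemma dz_Const[simp]: "dz x (Const c) = 0"
  by (simp add: Const_def dz_single)

lemma dz_Var: "dz y (Var a i) = Const (if y = (a, i) then 1 else 0)"
proof -
  have "dz y (Var a i) = sg (sg (a,i) 1 - ex y) (of_nat (lk (sg (a,i) 1) y))"
    by (simp add: Var_def dz_single)
  also have "\<dots> = Const (if y = (a, i) then 1 else 0)"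
    by (auto simp: Const_def ex_def lookup_single when_def)
  finally show ?thesis .
qed

lemma dz_Const_mult: "dz x (Const c * P) = Const c * dz x P"
  by (simp add: dz_mult)

definition vars :: "cpoly \<Rightarrow> (nat \<times> nat) set" where
  "vars P = \<Union> (ks ` ks P)"

lemma vars_add: "vars (P + Q) \<subseteq> vars P \<union> vars Q"
  unfolding vars_def using keys_add[of P Q] by blast

lemma vars_mult: "vars (P * Q) \<subseteq> vars P \<union> vars Q"
  unfolding vars_def using keys_mult[of P Q] by (force simp: keys_add_nat)

lemma vars_Const[simp]: "vars (Const c) = {}"
  by (simp add: vars_def Const_def)

lemma vars_single: "vars (sg \<alpha> c) \<subseteq> ks \<alpha>"
  by (simp add: vars_def)

lemma vars_Var: "vars (Var a i) = {(a, i)}"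
  by (simp add: vars_def Var_def)

lemma vars_0[simp]: "vars 0 = {}" by (simp add: vars_def)
lemma vars_1[simp]: "vars 1 = {}" using vars_Const[of 1] by simp

lemma vars_sum: "(\<And>i. i \<in> A \<Longrightarrow> vars (f i) \<subseteq> Y) \<Longrightarrow> vars (sum f A) \<subseteq> Y"
proof (induct A rule: infinite_finite_induct)
  case (insert x F) then show ?case using vars_add[of "f x" "sum f F"] by auto
qed auto

lemma vars_prod: "(\<And>i. i \<in> A \<Longrightarrow> vars (f i) \<subseteq> Y) \<Longrightarrow> vars (prod f A) \<subseteq> Y"
proof (induct A rule: infinite_finite_induct)
  case (insert x F) then show ?case using vars_mult[of "f x" "prod f F"] by auto
qed auto

lemma vars_power: "vars P \<subseteq> Y \<Longrightarrow> vars (P ^ k) \<subseteq> Y"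
proof (induct k)
  case (Suc k) then show ?case using vars_mult[of P "P^k"] by auto
qed auto

lemma vars_subst:
  assumes "\<And>x. x \<in> vars P \<Longrightarrow> vars (\<tau> x) \<subseteq> Y"
  shows "vars (subst \<tau> P) \<subseteq> Y"
  unfolding subst_alt
proof (rule vars_sum)
  fix \<alpha> assume a: "\<alpha> \<in> ks P"
  have "vars (monom \<tau> \<alpha>) \<subseteq> Y" unfolding monom_def
    by (rule vars_prod, rule vars_power, rule assms) (use a in \<open>auto simp: vars_def\<close>)
  then show "vars (Const (lk P \<alpha>) * monom \<tau> \<alpha>) \<subseteq> Y"
    using vars_mult[of "Const (lk P \<alpha>)" "monom \<tau> \<alpha>"] by auto
qed

lemma vars_dz: "vars (dz x P) \<subseteq> vars P"
  unfolding dz_def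
proof (rule vars_sum)
  fix \<alpha> assume a: "\<alpha> \<in> ks P"
  have "vars (sg (\<alpha> - ex x) (of_nat (lk \<alpha> x) * lk P \<alpha>)) \<subseteq> ks \<alpha>"
    using vars_single keys_minus_ex by blast
  also have "\<dots> \<subseteq> vars P" using a by (auto simp: vars_def)
  finally show "vars (sg (\<alpha> - ex x) (of_nat (lk \<alpha> x) * lk P \<alpha>)) \<subseteq> vars P" .
qed

section \<open>Degree and homogeneity\<close>

definition deg :: "mon \<Rightarrow> nat" where "deg \<alpha> = (\<Sum>x\<in>ks \<alpha>. lk \<alpha> x)"

lemma deg_superset: "finite S \<Longrightarrow> ks \<alpha> \<subseteq> S \<Longrightarrow> deg \<alpha> = (\<Sum>x\<in>S. lk \<alpha> x)"
  unfolding deg_def by (intro sum.mono_neutral_left) (auto simp: in_keys_iff)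

lemma deg_add: "deg (\<alpha> + \<beta>) = deg \<alpha> + deg \<beta>"
proof -
  let ?S = "ks \<alpha> \<union> ks \<beta>"
  show ?thesis
    by (subst (1 2 3) deg_superset[where S = ?S]) (auto simp: keys_add_nat lookup_add sum.distrib)
qed

lemma deg_ex: "deg (ex x) = 1" by (simp add: deg_def ex_def)

lemma deg_0_iff: "deg \<alpha> = 0 \<longleftrightarrow> \<alpha> = 0"
proof
  assume "deg \<alpha> = 0"
  then have "\<forall>x\<in>ks \<alpha>. lk \<alpha> x = 0" by (simp add: deg_def)
  then show "\<alpha> = 0" by (metis ex_in_conv in_keys_iff keys_eq_empty)
qed (simp add: deg_def)

definition homog :: "nat \<Rightarrow> cpoly \<Rightarrow> bool" where
  "homog m P \<longleftrightarrow> (\<forall>\<alpha>\<in>ks P. deg \<alpha> = m)"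

lemma homog_add: "homog m P \<Longrightarrow> homog m Q \<Longrightarrow> homog m (P + Q)"
  unfolding homog_def using keys_add[of P Q] by blast

lemma homog_0[simp]: "homog m 0" by (simp add: homog_def)

lemma homog_sum: "(\<And>i. i \<in> A \<Longrightarrow> homog m (f i)) \<Longrightarrow> homog m (sum f A)"
  by (induct A rule: infinite_finite_induct) (auto intro: homog_add)

lemma homog_mult: "homog a P \<Longrightarrow> homog b Q \<Longrightarrow> homog (a + b) (P * Q)"
  unfolding homog_def using keys_mult[of P Q] by (force simp: deg_add)

lemma homog_Const: "homog 0 (Const c)"
  by (simp add: homog_def Const_def deg_def)

lemma homog_1: "homog 0 1" using homog_Const[of 1] by simp

lemma homog_prod: "(\<And>i. i \<in> A \<Longrightarrow> homog (m i) (f i)) \<Longrightarrow> homog (\<Sum>i\<in>A. m i) (prod f A)"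
proof (induct A rule: infinite_finite_induct)
  case (insert x F) then show ?case by (auto intro: homog_mult)
qed (auto simp: homog_1)

lemma homog_power: "homog m P \<Longrightarrow> homog (k * m) (P ^ k)"
proof (induct k)
  case (Suc k) then show ?case using homog_mult[of m P "k*m" "P^k"] by simp
qed (simp add: homog_1)

lemma homog_Var: "homog 1 (Var a i)"
  by (simp add: homog_def Var_def deg_def)

lemma homog_single: "c = 0 \<or> deg \<alpha> = m \<Longrightarrow> homog m (sg \<alpha> c)"
  by (auto simp: homog_def)

lemma homog_Const_mult: "homog m P \<Longrightarrow> homog m (Const c * P)"
  using homog_mult[OF homog_Const] by fastforce

lemma homog_subst:
  assumes "\<And>x. x \<in> vars P \<Longrightarrow> homog 1 (\<tau> x)" "homog m P"
  shows "homog m (subst \<tau> P)"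
  unfolding subst_alt
proof (rule homog_sum)
  fix \<alpha> assume a: "\<alpha> \<in> ks P"
  have "homog (\<Sum>x\<in>ks \<alpha>. lk \<alpha> x * 1) (monom \<tau> \<alpha>)" unfolding monom_def
    by (rule homog_prod, rule homog_power, rule assms(1)) (use a in \<open>auto simp: vars_def\<close>)
  then have "homog m (monom \<tau> \<alpha>)" using assms(2) a by (simp add: homog_def deg_def)
  then show "homog m (Const (lk P \<alpha>) * monom \<tau> \<alpha>)" by (rule homog_Const_mult)
qed

lemma homog_dz: assumes "homog (Suc m) P" shows "homog m (dz x P)"
  unfolding dz_def
proof (rule homog_sum, rule homog_single)
  fix \<alpha> assume a: "\<alpha> \<in> ks P"
  show "of_nat (lk \<alpha> x) * lk P \<alpha> = 0 \<or> deg (\<alpha> - ex x) = m"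
  proof (cases "lk \<alpha> x = 0")
    case False
    then have "deg (\<alpha> - ex x) + 1 = deg \<alpha>"
      using minus_ex_plus[of \<alpha> x] deg_add[of "\<alpha> - ex x" "ex x"] deg_ex by simp
    then show ?thesis using assms a by (simp add: homog_def)
  qed simp
qed

lemma homog0_Const: assumes "homog 0 P" shows "P = Const (lk P 0)"
proof (rule poly_mapping_eqI)
  fix \<beta>
  show "lk P \<beta> = lk (Const (lk P 0)) \<beta>"
  proof (cases "\<beta> = 0")
    case False
    then have "\<beta> \<notin> ks P" using assms by (auto simp: homog_def deg_0_iff)
    then show ?thesis using False by (simp add: Const_def lookup_single when_def in_keys_iff)
  qed (simp add: Const_def)
qed

lemma single_pow: "(sg (sg x 1) (1::complex)) ^ k = sg (sg x k) 1"
  by (induct k) (simp_all add: mult_single single_add[symmetric])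

lemma single_pow': "(sg (sg x (Suc 0)) (1::complex)) ^ k = sg (sg x k) 1"
  using single_pow[of x k] by simp

lemma prod_single: "finite S \<Longrightarrow> (\<Prod>x\<in>S. sg (g x) (1::complex)) = sg (\<Sum>x\<in>S. g x) 1"
  by (induct S rule: finite_induct) (simp_all add: mult_single)

lemma monom_Var: "monom (\<lambda>x. Var (fst x) (snd x)) \<alpha> = sg \<alpha> 1"
proof -
  have "monom (\<lambda>x. Var (fst x) (snd x)) \<alpha> = (\<Prod>x\<in>ks \<alpha>. sg (sg x (lk \<alpha> x)) (1::complex))"
    by (simp add: monom_def Var_def single_pow')
  also have "\<dots> = sg (\<Sum>x\<in>ks \<alpha>. sg x (lk \<alpha> x)) 1" by (simp add: prod_single)
  also have "\<dots> = sg \<alpha> 1" using poly_expand[of \<alpha>] by simp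
  finally show ?thesis .
qed

lemma poly_induct_vars[consumes 1, case_names Const Var A M]:
  assumes "vars P \<subseteq> X"
    and C: "\<And>c. \<Phi> (Const c)" and V: "\<And>a i. (a, i) \<in> X \<Longrightarrow> \<Phi> (Var a i)"
    and A: "\<And>A B. \<Phi> A \<Longrightarrow> \<Phi> B \<Longrightarrow> \<Phi> (A + B)"
    and M: "\<And>A B. \<Phi> A \<Longrightarrow> \<Phi> B \<Longrightarrow> \<Phi> (A * B)"
  shows "\<Phi> P"
proof -
  have z: "\<Phi> 0" using C[of 0] by simp
  have o: "\<Phi> 1" using C[of 1] by simp
  have S: "\<And>f S. (\<And>i. i \<in> S \<Longrightarrow> \<Phi> (f i)) \<Longrightarrow> \<Phi> (sum f S)"
  proof -
    fix f and S :: "'b set" assume h: "\<And>i. i \<in> S \<Longrightarrow> \<Phi> (f i)"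
    show "\<Phi> (sum f S)" using h by (induct S rule: infinite_finite_induct) (auto simp: z A)
  qed
  have Pr: "\<And>f S. (\<And>i. i \<in> S \<Longrightarrow> \<Phi> (f i)) \<Longrightarrow> \<Phi> (prod f S)"
  proof -
    fix f and S :: "'b set" assume h: "\<And>i. i \<in> S \<Longrightarrow> \<Phi> (f i)"
    show "\<Phi> (prod f S)" using h by (induct S rule: infinite_finite_induct) (auto simp: o M)
  qed
  have Pw: "\<And>B k. \<Phi> B \<Longrightarrow> \<Phi> (B ^ k)"
  proof -
    fix B and k :: nat assume "\<Phi> B" then show "\<Phi> (B ^ k)" by (induct k) (auto simp: o M)
  qed
  have "P = (\<Sum>\<alpha>\<in>ks P. Const (lk P \<alpha>) * monom (\<lambda>x. Var (fst x) (snd x)) \<alpha>)"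
    by (subst poly_expand) (simp add: monom_Var Const_def mult_single)
  also have "\<Phi> \<dots>"
  proof (rule S, rule M[OF C])
    fix \<alpha> assume a: "\<alpha> \<in> ks P"
    show "\<Phi> (monom (\<lambda>x. Var (fst x) (snd x)) \<alpha>)" unfolding monom_def
    proof (rule Pr, rule Pw)
      fix x assume "x \<in> ks \<alpha>"
      then have "x \<in> X" using a assms(1) by (auto simp: vars_def)
      then show "\<Phi> (Var (fst x) (snd x))" by (intro V) simp
    qed
  qed
  finally show ?thesis .
qed

section \<open>Chain rule\<close>

lemma chain_rule:
  assumes "finite X" "vars P \<subseteq> X"
  shows "dz y (subst \<tau> P) = (\<Sum>x\<in>X. subst \<tau> (dz x P) * dz y (\<tau> x))"
  using assms(2)
proof (induct P rule: poly_induct_vars)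
  case (Const c) then show ?case by simp
next
  case (Var a i)
  have "(\<Sum>x\<in>X. subst \<tau> (dz x (Var a i)) * dz y (\<tau> x)) =
        (\<Sum>x\<in>X. if x = (a, i) then dz y (\<tau> x) else 0)"
    by (rule sum.cong) (auto simp: dz_Var)
  also have "\<dots> = dz y (\<tau> (a, i))" using Var assms(1) by (simp add: sum.delta)
  finally show ?case by simp
next
  case (A P Q) then show ?case by (simp add: subst_add dz_add distrib_right sum.distrib)
next
  case (M P Q)
  have "dz y (subst \<tau> (P * Q)) = dz y (subst \<tau> P) * subst \<tau> Q + subst \<tau> P * dz y (subst \<tau> Q)"
    by (simp add: subst_mult dz_mult)
  also have "\<dots> = (\<Sum>x\<in>X. subst \<tau> (dz x P) * dz y (\<tau> x) * subst \<tau> Q) +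
      (\<Sum>x\<in>X. subst \<tau> P * (subst \<tau> (dz x Q) * dz y (\<tau> x)))"
    by (simp add: M sum_distrib_left sum_distrib_right)
  also have "\<dots> = (\<Sum>x\<in>X. subst \<tau> (dz x (P * Q)) * dz y (\<tau> x))"
    by (simp add: sum.distrib[symmetric] dz_mult subst_add subst_mult algebra_simps)
  finally show ?case .
qed




definition mfr :: "mon \<Rightarrow> real" where "mfr \<alpha> = (\<Prod>x\<in>ks \<alpha>. fact (lk \<alpha> x))"

lemma mfr_superset: "finite S \<Longrightarrow> ks \<alpha> \<subseteq> S \<Longrightarrow> mfr \<alpha> = (\<Prod>x\<in>S. fact (lk \<alpha> x))"
  unfolding mfr_def by (intro prod.mono_neutral_left) (auto simp: in_keys_iff)

lemma mfr_minus_ex: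
  assumes "1 \<le> lk \<alpha> x"
  shows "of_nat (lk \<alpha> x) * mfr (\<alpha> - ex x) = mfr \<alpha>"
proof -
  let ?S = "ks \<alpha>"
  have xS: "x \<in> ?S" using assms by (simp add: in_keys_iff)
  have "mfr (\<alpha> - ex x) = (\<Prod>y\<in>?S. fact (lk (\<alpha> - ex x) y))"
    by (rule mfr_superset) (auto simp: keys_minus_ex)
  also have "\<dots> = fact (lk (\<alpha> - ex x) x) * (\<Prod>y\<in>?S - {x}. fact (lk (\<alpha> - ex x) y))"
    by (rule prod.remove[OF _ xS]) simp
  also have "(\<Prod>y\<in>?S - {x}. fact (lk (\<alpha> - ex x) y)) = (\<Prod>y\<in>?S - {x}. fact (lk \<alpha> y))"
    by (rule prod.cong) (auto simp: lookup_minus_ex)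
  also have "lk (\<alpha> - ex x) x = lk \<alpha> x - 1" by (simp add: lookup_minus_ex)
  finally have 1: "mfr (\<alpha> - ex x) = fact (lk \<alpha> x - 1) * (\<Prod>y\<in>?S - {x}. fact (lk \<alpha> y))" .
  have 2: "mfr \<alpha> = fact (lk \<alpha> x) * (\<Prod>y\<in>?S - {x}. fact (lk \<alpha> y))"
    unfolding mfr_def by (subst prod.remove[OF _ xS]) auto
  have 3: "(fact (lk \<alpha> x) :: real) = of_nat (lk \<alpha> x) * fact (lk \<alpha> x - 1)"
    using assms by (simp add: fact_reduce)
  show ?thesis using 1 2 3 by simp
qed

definition ip :: "cpoly \<Rightarrow> cpoly \<Rightarrow> complex" where
  "ip P Q = (\<Sum>\<alpha>\<in>ks P. lk P \<alpha> * cnj (lk Q \<alpha>) * of_real (mfr \<alpha>))"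

lemma ip_superset: "finite S \<Longrightarrow> ks P \<subseteq> S \<Longrightarrow>
   ip P Q = (\<Sum>\<alpha>\<in>S. lk P \<alpha> * cnj (lk Q \<alpha>) * of_real (mfr \<alpha>))"
  unfolding ip_def by (intro sum.mono_neutral_left) (auto simp: in_keys_iff)

lemma ip_add_left: "ip (P + P') Q = ip P Q + ip P' Q"
proof -
  let ?S = "ks P \<union> ks P'"
  have k: "ks (P + P') \<subseteq> ?S" by (rule keys_add)
  show ?thesis
    by (subst (1 2 3) ip_superset[where S = ?S]) (auto simp: k lookup_add distrib_right sum.distrib)
qed

lemma ip_add_right: "ip P (Q + Q') = ip P Q + ip P Q'"
  by (simp add: ip_def lookup_add distrib_left distrib_right sum.distrib)

lemma ip_0_left[simp]: "ip 0 Q = 0" by (simp add: ip_def)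
lemma ip_0_right[simp]: "ip P 0 = 0" by (simp add: ip_def)

lemma ip_sum_left: "ip (sum f A) Q = (\<Sum>i\<in>A. ip (f i) Q)"
  by (induct A rule: infinite_finite_induct) (simp_all add: ip_add_left)

lemma ip_sum_right: "ip P (sum f A) = (\<Sum>i\<in>A. ip P (f i))"
  by (induct A rule: infinite_finite_induct) (simp_all add: ip_add_right)

lemma keys_Const_mult: "ks (Const c * P) \<subseteq> ks P"
  by (auto simp: in_keys_iff lookup_Const_mult)

lemma ip_Const_left: "ip (Const c * P) Q = c * ip P Q"
proof -
  have "ip (Const c * P) Q = (\<Sum>\<alpha>\<in>ks P. lk (Const c * P) \<alpha> * cnj (lk Q \<alpha>) * of_real (mfr \<alpha>))"
    by (rule ip_superset) (simp_all add: keys_Const_mult)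
  then show ?thesis by (simp add: lookup_Const_mult ip_def sum_distrib_left mult.assoc)
qed

lemma ip_Const_right: "ip P (Const c * Q) = cnj c * ip P Q"
  unfolding ip_def lookup_Const_mult sum_distrib_left
  by (rule sum.cong) (simp_all add: mult.assoc mult.left_commute)

lemma ip_single: "ip (sg \<alpha> a) (sg \<beta> b) = (if \<alpha> = \<beta> then a * cnj b * of_real (mfr \<alpha>) else 0)"
  by (auto simp: ip_def lookup_single when_def)

lemma ip_Const: "ip (Const a) (Const b) = a * cnj b"
  by (simp add: Const_def ip_single mfr_def)

lemma norm_sq_ip: "norm_sq P = Re (ip P P)"
proof -
  have "ip P P = (\<Sum>\<alpha>\<in>ks P. of_real ((cmod (lk P \<alpha>))\<^sup>2 * (\<Prod>x\<in>ks \<alpha>. fact (lk \<alpha> x))))"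
    unfolding ip_def mfr_def
    by (rule sum.cong) (auto simp: complex_mult_cnj cmod_power2)
  then have "Re (ip P P) = (\<Sum>\<alpha>\<in>ks P. (cmod (lk P \<alpha>))\<^sup>2 * (\<Prod>x\<in>ks \<alpha>. fact (lk \<alpha> x)))"
    by (simp only: Re_sum Re_complex_of_real)
  then show ?thesis by (simp add: norm_sq_def)
qed

lemma euler_mon:
  assumes "finite X" "ks \<alpha> \<subseteq> X"
  shows "(\<Sum>x\<in>X. ip (dz x (sg \<alpha> a)) (dz x (sg \<beta> b))) =
     (if \<alpha> = \<beta> then of_nat (deg \<alpha>) * a * cnj b * of_real (mfr \<alpha>) else 0)"
proof (cases "\<alpha> = \<beta>")
  case True
  have "(\<Sum>x\<in>X. ip (dz x (sg \<alpha> a)) (dz x (sg \<beta> b))) =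
        (\<Sum>x\<in>X. of_nat (lk \<alpha> x) * (a * cnj b * of_real (mfr \<alpha>)))"
  proof (rule sum.cong)
    fix x assume "x \<in> X"
    show "ip (dz x (sg \<alpha> a)) (dz x (sg \<beta> b)) = of_nat (lk \<alpha> x) * (a * cnj b * of_real (mfr \<alpha>))"
    proof (cases "lk \<alpha> x = 0")
      case False
      then have m: "of_nat (lk \<alpha> x) * mfr (\<alpha> - ex x) = mfr \<alpha>" by (intro mfr_minus_ex) simp
      have "ip (dz x (sg \<alpha> a)) (dz x (sg \<beta> b)) =
        of_nat (lk \<alpha> x) * a * cnj b * of_real (of_nat (lk \<alpha> x) * mfr (\<alpha> - ex x))"
        using True by (simp add: dz_single ip_single ac_simps)
      then show ?thesis by (simp add: m ac_simps)
    qed (simp add: dz_single ip_single)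
  qed simp
  also have "\<dots> = of_nat (deg \<alpha>) * (a * cnj b * of_real (mfr \<alpha>))"
    by (simp add: sum_distrib_right[symmetric] deg_superset[OF assms])
  finally show ?thesis using True by simp
next
  case False
  have "ip (dz x (sg \<alpha> a)) (dz x (sg \<beta> b)) = 0" for x
  proof (cases "lk \<alpha> x = 0 \<or> lk \<beta> x = 0")
    case True then show ?thesis by (auto simp: dz_single ip_single)
  next
    case F: False
    then have "\<alpha> - ex x \<noteq> \<beta> - ex x" using False minus_ex_inj[of \<alpha> x \<beta>] by auto
    then show ?thesis by (simp add: dz_single ip_single)
  qed
  then show ?thesis using False by simp
qed

lemma dz_expand: "dz x P = (\<Sum>\<alpha>\<in>ks P. dz x (sg \<alpha> (lk P \<alpha>)))"
  by (simp only: dz_single) (simp only: dz_def)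

lemma euler:
  assumes "finite X" "vars P \<subseteq> X" "homog m P"
  shows "(\<Sum>x\<in>X. ip (dz x P) (dz x Q)) = of_nat m * ip P Q"
proof -
  have "(\<Sum>x\<in>X. ip (dz x P) (dz x Q)) =
     (\<Sum>x\<in>X. \<Sum>\<alpha>\<in>ks P. \<Sum>\<beta>\<in>ks Q. ip (dz x (sg \<alpha> (lk P \<alpha>))) (dz x (sg \<beta> (lk Q \<beta>))))"
    by (subst (1 2) dz_expand) (simp only: ip_sum_left, simp only: ip_sum_right)
  also have "\<dots> = (\<Sum>\<alpha>\<in>ks P. \<Sum>x\<in>X. \<Sum>\<beta>\<in>ks Q. ip (dz x (sg \<alpha> (lk P \<alpha>))) (dz x (sg \<beta> (lk Q \<beta>))))"
    by (rule sum.swap)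
  also have "\<dots> = (\<Sum>\<alpha>\<in>ks P. \<Sum>\<beta>\<in>ks Q. \<Sum>x\<in>X. ip (dz x (sg \<alpha> (lk P \<alpha>))) (dz x (sg \<beta> (lk Q \<beta>))))"
    by (rule sum.cong[OF refl], rule sum.swap)
  also have "\<dots> = (\<Sum>\<alpha>\<in>ks P. \<Sum>\<beta>\<in>ks Q. if \<alpha> = \<beta> then of_nat m * (lk P \<alpha> * cnj (lk Q \<alpha>) * of_real (mfr \<alpha>)) else 0)"
  proof (intro sum.cong refl)
    fix \<alpha> \<beta> assume a: "\<alpha> \<in> ks P"
    have "ks \<alpha> \<subseteq> X" using a assms(2) by (auto simp: vars_def)
    moreover have "deg \<alpha> = m" using a assms(3) by (simp add: homog_def)
    ultimately show "(\<Sum>x\<in>X. ip (dz x (sg \<alpha> (lk P \<alpha>))) (dz x (sg \<beta> (lk Q \<beta>)))) =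
      (if \<alpha> = \<beta> then of_nat m * (lk P \<alpha> * cnj (lk Q \<alpha>) * of_real (mfr \<alpha>)) else 0)"
      using euler_mon[OF assms(1), of \<alpha> "lk P \<alpha>" \<beta> "lk Q \<beta>"] by (cases "\<alpha> = \<beta>") (simp_all add: ac_simps)
  qed
  also have "\<dots> = (\<Sum>\<alpha>\<in>ks P. of_nat m * (lk P \<alpha> * cnj (lk Q \<alpha>) * of_real (mfr \<alpha>)))"
    by (rule sum.cong) (auto simp: in_keys_iff)
  also have "\<dots> = of_nat m * ip P Q" by (simp add: ip_def sum_distrib_left)
  finally show ?thesis .
qed





lemma lin_vars: "vars (\<Sum>y\<in>X. Const (U y) * Var (fst y) (snd y)) \<subseteq> X"
proof (rule vars_sum)
  fix y assume "y \<in> X"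
  have "vars (Const (U y) * Var (fst y) (snd y)) \<subseteq> {y}"
    using vars_mult[of "Const (U y)" "Var (fst y) (snd y)"] by (simp add: vars_Var)
  then show "vars (Const (U y) * Var (fst y) (snd y)) \<subseteq> X" using \<open>y \<in> X\<close> by auto
qed

lemma lin_homog: "homog 1 (\<Sum>y\<in>X. Const (U y) * Var (fst y) (snd y))"
  by (rule homog_sum, rule homog_Const_mult, rule homog_Var)

lemma lin_dz: assumes "finite X" "y \<in> X"
  shows "dz y (\<Sum>y\<in>X. Const (U y) * Var (fst y) (snd y)) = Const (U y)"
proof -
  have "dz y (\<Sum>y\<in>X. Const (U y) * Var (fst y) (snd y)) = (\<Sum>y'\<in>X. if y' = y then Const (U y') else 0)"
    unfolding dz_sum by (rule sum.cong) (auto simp: dz_Const_mult dz_Var)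
  then show ?thesis using assms by simp
qed

lemma unitary_inv:
  fixes X :: "(nat \<times> nat) set" and U :: "nat \<times> nat \<Rightarrow> nat \<times> nat \<Rightarrow> complex"
  assumes fin: "finite X"
    and tau: "\<And>x. x \<in> X \<Longrightarrow> \<tau> x = (\<Sum>y\<in>X. Const (U y x) * Var (fst y) (snd y))"
    and orth: "\<And>x x'. x \<in> X \<Longrightarrow> x' \<in> X \<Longrightarrow> (\<Sum>y\<in>X. U y x * cnj (U y x')) = (if x = x' then 1 else 0)"
  shows "homog m P \<Longrightarrow> homog m Q \<Longrightarrow> vars P \<subseteq> X \<Longrightarrow> vars Q \<subseteq> X \<Longrightarrow>
         ip (subst \<tau> P) (subst \<tau> Q) = ip P Q"
proof (induct m arbitrary: P Q)
  case 0
  then have "P = Const (lk P 0)" "Q = Const (lk Q 0)" by (simp_all add: homog0_Const)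
  then show ?case by (metis subst_Const)
next
  case (Suc m P Q)
    have tv: "vars (\<tau> x) \<subseteq> X" if "x \<in> X" for x
      unfolding tau[OF that] by (rule lin_vars)
    have th: "homog 1 (\<tau> x)" if "x \<in> X" for x
      unfolding tau[OF that] by (rule lin_homog)
    have td: "dz y (\<tau> x) = Const (U y x)" if "x \<in> X" "y \<in> X" for x y
      unfolding tau[OF that(1)] by (rule lin_dz[OF fin that(2)])
    let ?s = "subst \<tau>"
    have vs: "vars (?s R) \<subseteq> X" if "vars R \<subseteq> X" for R
      by (rule vars_subst) (use that tv in auto)
    have hs: "homog (Suc m) (?s R)" if "vars R \<subseteq> X" "homog (Suc m) R" for R
      by (rule homog_subst) (use that th in auto)
    have D: "dz y (?s R) = (\<Sum>x\<in>X. Const (U y x) * ?s (dz x R))" if "y \<in> X" "vars R \<subseteq> X" for y R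
    proof -
      have "dz y (?s R) = (\<Sum>x\<in>X. ?s (dz x R) * dz y (\<tau> x))" by (rule chain_rule[OF fin that(2)])
      also have "\<dots> = (\<Sum>x\<in>X. Const (U y x) * ?s (dz x R))"
        by (rule sum.cong) (simp_all add: td that(1) mult.commute)
      finally show ?thesis .
    qed
    have "of_nat (Suc m) * ip (?s P) (?s Q) = (\<Sum>y\<in>X. ip (dz y (?s P)) (dz y (?s Q)))"
      by (rule euler[symmetric, OF fin vs hs]) (use Suc in auto)
    also have "\<dots> = (\<Sum>y\<in>X. \<Sum>x\<in>X. \<Sum>x'\<in>X. U y x * cnj (U y x') * ip (?s (dz x P)) (?s (dz x' Q)))"
    proof (rule sum.cong[OF refl])
      fix y assume y: "y \<in> X"
      show "ip (dz y (?s P)) (dz y (?s Q)) = (\<Sum>x\<in>X. \<Sum>x'\<in>X. U y x * cnj (U y x') * ip (?s (dz x P)) (?s (dz x' Q)))"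
      proof -
        have "ip (dz y (?s P)) (dz y (?s Q)) = (\<Sum>x'\<in>X. \<Sum>x\<in>X. cnj (U y x') * (U y x * ip (?s (dz x P)) (?s (dz x' Q))))"
          unfolding D[OF y Suc(4)] D[OF y Suc(5)]
          by (simp only: ip_sum_left ip_Const_left ip_sum_right ip_Const_right sum_distrib_left mult.assoc)
        also have "\<dots> = (\<Sum>x\<in>X. \<Sum>x'\<in>X. cnj (U y x') * (U y x * ip (?s (dz x P)) (?s (dz x' Q))))"
          by (rule sum.swap)
        also have "\<dots> = (\<Sum>x\<in>X. \<Sum>x'\<in>X. U y x * cnj (U y x') * ip (?s (dz x P)) (?s (dz x' Q)))"
          by (intro sum.cong refl) (simp add: ac_simps)
        finally show ?thesis .
      qed
    qed
    also have "\<dots> = (\<Sum>x\<in>X. \<Sum>y\<in>X. \<Sum>x'\<in>X. U y x * cnj (U y x') * ip (?s (dz x P)) (?s (dz x' Q)))"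
      by (rule sum.swap)
    also have "\<dots> = (\<Sum>x\<in>X. \<Sum>x'\<in>X. \<Sum>y\<in>X. U y x * cnj (U y x') * ip (?s (dz x P)) (?s (dz x' Q)))"
      by (rule sum.cong[OF refl], rule sum.swap)
    also have "\<dots> = (\<Sum>x\<in>X. \<Sum>x'\<in>X. (\<Sum>y\<in>X. U y x * cnj (U y x')) * ip (?s (dz x P)) (?s (dz x' Q)))"
      by (simp add: sum_distrib_right)
    also have "\<dots> = (\<Sum>x\<in>X. \<Sum>x'\<in>X. if x = x' then ip (?s (dz x P)) (?s (dz x' Q)) else 0)"
      by (intro sum.cong refl) (simp add: orth)
    also have "\<dots> = (\<Sum>x\<in>X. ip (?s (dz x P)) (?s (dz x Q)))"
      using fin by simp
    also have "\<dots> = (\<Sum>x\<in>X. ip (dz x P) (dz x Q))"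
    proof (rule sum.cong[OF refl])
      fix x assume "x \<in> X"
      show "ip (?s (dz x P)) (?s (dz x Q)) = ip (dz x P) (dz x Q)"
        by (rule Suc(1)) (use Suc(2-5) vars_dz homog_dz order.trans in \<open>blast\<close>)+
    qed
    also have "\<dots> = of_nat (Suc m) * ip P Q"
      by (rule euler[OF fin]) (use Suc in auto)
    finally have "of_nat (Suc m) * ip (?s P) (?s Q) = of_nat (Suc m) * ip P Q" .
    then show ?case by (simp only: mult_cancel_left of_nat_eq_0_iff) simp
qed




section \<open>Leibniz determinant vs JNF\<close>

lemma ldet_det: "ldet p M = det (mat p p (\<lambda>(i, j). M i j))"
  unfolding ldet_def det_def
  by (auto simp: atLeast0LessThan permutes_in_image intro!: sum.cong prod.cong arg_cong2[where f = "(*)"])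

lemma ldet_cong: "(\<And>a b. a < p \<Longrightarrow> b < p \<Longrightarrow> M a b = M' a b) \<Longrightarrow> ldet p M = ldet p M'"
  unfolding ldet_def
  by (auto simp: permutes_in_image intro!: sum.cong prod.cong arg_cong2[where f = "(*)"])

lemma ldet_mult:
  fixes A B :: "nat \<Rightarrow> nat \<Rightarrow> 'r::comm_ring_1"
  shows "ldet p (\<lambda>a b. \<Sum>k<p. A a k * B k b) = ldet p A * ldet p B"
proof -
  have "mat p p (\<lambda>(i, j). \<Sum>k<p. A i k * B k j) = mat p p (\<lambda>(i, j). A i j) * mat p p (\<lambda>(i, j). B i j)"
    by (rule eq_matI) (auto simp: scalar_prod_def atLeast0LessThan intro!: sum.cong)
  then show ?thesis unfolding ldet_det
    by (simp add: det_mult[of _ p])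
qed

lemma ldet_transpose: "ldet p (\<lambda>a b. M b a) = ldet p M"
proof -
  have "mat p p (\<lambda>(i, j). M j i) = transpose_mat (mat p p (\<lambda>(i, j). M i j))"
    by (rule eq_matI) auto
  then show ?thesis unfolding ldet_det by (simp add: det_transpose[of _ p])
qed

lemma ldet_cnj: "ldet p (\<lambda>a b. cnj (M a b)) = cnj (ldet p M)"
  unfolding ldet_def by (simp add: cnj_sum cnj_prod)

lemma ldet_Const: "ldet p (\<lambda>a b. Const (M a b)) = Const (ldet p M)"
  unfolding ldet_def by (simp add: Const_sum Const_mult Const_prod Const_of_int)




definition cip :: "nat \<Rightarrow> (nat \<Rightarrow> complex) \<Rightarrow> (nat \<Rightarrow> complex) \<Rightarrow> complex" where
  "cip n u w = (\<Sum>i<n. u i * cnj (w i))"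

lemma cip_swap: "cip n u w = cnj (cip n w u)"
  by (simp add: cip_def cnj_sum mult.commute)

lemma cip_scale_left: "cip n (\<lambda>i. u i / a) w = cip n u w / a"
  by (simp add: cip_def sum_divide_distrib)

lemma cip_comb:
  "cip n (\<lambda>i. u i - (\<Sum>k<m. c k * w k i)) z = cip n u z - (\<Sum>k<m. c k * cip n (w k) z)"
proof -
  have "cip n (\<lambda>i. u i - (\<Sum>k<m. c k * w k i)) z =
        cip n u z - (\<Sum>i<n. \<Sum>k<m. c k * (w k i * cnj (z i)))"
    by (simp add: cip_def left_diff_distrib sum_subtractf sum_distrib_right mult.assoc)
  also have "(\<Sum>i<n. \<Sum>k<m. c k * (w k i * cnj (z i))) = (\<Sum>k<m. c k * cip n (w k) z)"
    by (subst sum.swap) (simp add: cip_def sum_distrib_left)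
  finally show ?thesis .
qed

lemma gs_exists:
  assumes det: "ldet n g \<noteq> 0"
  shows "m \<le> n \<Longrightarrow> \<exists>q R S. (\<forall>k<m. \<forall>k'<m. cip n (q k) (q k') = (if k = k' then 1 else 0))
    \<and> (\<forall>j<m. \<forall>i<n. g i j = (\<Sum>k<m. R k j * q k i))
    \<and> (\<forall>j<m. \<forall>k. j < k \<longrightarrow> R k j = 0)
    \<and> (\<forall>j<m. \<forall>i<n. q j i = (\<Sum>k<m. S k j * g i k))"
proof (induct m)
  case 0 show ?case by simp
next
  case (Suc m)
  then have mn: "m < n" and mn': "m \<le> n" by auto
  from Suc.hyps[OF mn'] obtain q R S where
    o: "\<forall>k<m. \<forall>k'<m. cip n (q k) (q k') = (if k = k' then 1 else 0)" and
    gR: "\<forall>j<m. \<forall>i<n. g i j = (\<Sum>k<m. R k j * q k i)" and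
    Rt: "\<forall>j<m. \<forall>k. j < k \<longrightarrow> R k j = 0" and
    qS: "\<forall>j<m. \<forall>i<n. q j i = (\<Sum>k<m. S k j * g i k)" by blast
  define c where "c k = cip n (\<lambda>i. g i m) (q k)" for k
  define v where "v i = g i m - (\<Sum>k<m. c k * q k i)" for i
  have vq: "cip n v (q k) = 0" if "k < m" for k
  proof -
    have "cip n v (q k) = c k - (\<Sum>k'<m. c k' * cip n (q k') (q k))"
      unfolding v_def cip_comb c_def ..
    also have "(\<Sum>k'<m. c k' * cip n (q k') (q k)) = (\<Sum>k'<m. if k' = k then c k else 0)"
      by (rule sum.cong) (use o that in auto)
    also have "\<dots> = c k" using that by simp
    finally show ?thesis by simp
  qed
  show ?case
  proof (cases "\<forall>i<n. v i = 0")
    case True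
    define y where "y l = - (\<Sum>k<m. c k * S l k)" for l
    define x where "x l = (if l = m then 1 else if l < m then y l else 0)" for l
    have gx: "(\<Sum>l<n. g i l * x l) = 0" if i: "i < n" for i
    proof -
      have "(\<Sum>l<n. g i l * x l) = (\<Sum>l<n. (if l = m then g i m else 0) + (if l < m then g i l * y l else 0))"
        by (rule sum.cong) (auto simp: x_def)
      also have "\<dots> = (\<Sum>l<n. (if l = m then g i m else 0)) + (\<Sum>l<n. (if l < m then g i l * y l else 0))"
        by (rule sum.distrib)
      also have "(\<Sum>l<n. (if l = m then g i m else 0)) = g i m" using mn by simp
      also have "(\<Sum>l<n. (if l < m then g i l * y l else 0)) = (\<Sum>l\<in>{l\<in>{..<n}. l < m}. g i l * y l)"
        by (rule sum.inter_filter[symmetric]) simp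
      also have "{l\<in>{..<n}. l < m} = {..<m}" using mn by auto
      also have "(\<Sum>l<m. g i l * y l) = - (\<Sum>l<m. \<Sum>k<m. c k * (S l k * g i l))"
        by (simp add: y_def sum_distrib_left sum_negf ac_simps)
      also have "(\<Sum>l<m. \<Sum>k<m. c k * (S l k * g i l)) = (\<Sum>k<m. \<Sum>l<m. c k * (S l k * g i l))"
        by (rule sum.swap)
      also have "\<dots> = (\<Sum>k<m. c k * (\<Sum>l<m. S l k * g i l))"
        by (simp add: sum_distrib_left)
      also have "(\<Sum>k<m. c k * (\<Sum>l<m. S l k * g i l)) = (\<Sum>k<m. c k * q k i)"
        using qS i by (intro sum.cong refl) simp
      also have "g i m + - (\<Sum>k<m. c k * q k i) = v i" by (simp add: v_def)
      finally show ?thesis using True i by simp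
    qed
    let ?A = "mat n n (\<lambda>(i, j). g i j)"
    have v1: "?A *\<^sub>v vec n x = 0\<^sub>v n"
      by (rule eq_vecI) (auto simp: scalar_prod_def atLeast0LessThan gx)
    have v2: "vec n x \<noteq> 0\<^sub>v n"
    proof
      assume "vec n x = 0\<^sub>v n"
      then have "vec n x $ m = 0\<^sub>v n $ m" by simp
      then show False using mn by (simp add: x_def)
    qed
    have A: "?A \<in> carrier_mat n n" by simp
    have "det ?A = 0" unfolding det_0_iff_vec_prod_zero[OF A]
      using v1 v2 vec_carrier by blast
    then show ?thesis using det by (simp add: ldet_det)
  next
    case False
    then obtain i0 where i0: "i0 < n" "v i0 \<noteq> 0" by auto
    define N where "N = sqrt (\<Sum>i<n. (cmod (v i))\<^sup>2)"
    have "0 < (\<Sum>i<n. (cmod (v i))\<^sup>2)"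
      by (rule sum_pos2[of _ i0]) (use i0 in auto)
    then have Npos: "0 < N" by (simp add: N_def)
    have vv: "cip n v v = of_real (N\<^sup>2)"
    proof -
      have "cip n v v = (\<Sum>i<n. complex_of_real ((cmod (v i))\<^sup>2))"
        unfolding cip_def by (rule sum.cong) (simp_all only: complex_norm_square)
      also have "\<dots> = of_real (\<Sum>i<n. (cmod (v i))\<^sup>2)" by (simp only: of_real_sum)
      also have "(\<Sum>i<n. (cmod (v i))\<^sup>2) = N\<^sup>2" unfolding N_def
        by (simp add: sum_nonneg)
      finally show ?thesis .
    qed
    define q' where "q' = q(m := (\<lambda>i. v i / of_real N))"
    define R' where "R' k j = (if j = m then (if k < m then c k else if k = m then of_real N else 0) else R k j)" for k j
    define S' where "S' l j = (if j = m then (if l = m then 1 / of_real N else if l < m then - (\<Sum>k<m. c k * S l k) / of_real N else 0)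
       else if l < m then S l j else 0)" for l j
    have h1: "\<forall>k<Suc m. \<forall>k'<Suc m. cip n (q' k) (q' k') = (if k = k' then 1 else 0)"
    proof (intro allI impI)
      fix k k' assume k: "k < Suc m" and k': "k' < Suc m"
      show "cip n (q' k) (q' k') = (if k = k' then 1 else 0)"
      proof (cases "k = m")
        case km: True
        show ?thesis
        proof (cases "k' = m")
          case True
          have "cip n (q' k) (q' k') = cip n v v / (of_real N * of_real N)"
            using km True by (simp add: q'_def cip_def sum_divide_distrib)
          then show ?thesis using km True vv Npos by (simp add: power2_eq_square)
        next
          case False
          then have "k' < m" using k' by simp
          then show ?thesis using km False
            by (simp add: q'_def cip_scale_left[of n v "of_real N"] vq)
        qed
      next
        case kn: False
        then have km: "k < m" using k by simp
        show ?thesis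
        proof (cases "k' = m")
          case True
          have "cip n (q' k) (q' k') = cnj (cip n v (q k) / of_real N)"
            using kn True by (simp add: q'_def cip_swap[of n "q k"] cip_scale_left)
          then show ?thesis using vq[OF km] kn True by simp
        next
          case False
          then show ?thesis using o km k' kn by (simp add: q'_def)
        qed
      qed
    qed
    have h2: "\<forall>j<Suc m. \<forall>i<n. g i j = (\<Sum>k<Suc m. R' k j * q' k i)"
    proof (intro allI impI)
      fix j i assume j: "j < Suc m" and i: "i < n"
      show "g i j = (\<Sum>k<Suc m. R' k j * q' k i)"
      proof (cases "j = m")
        case True
        have "(\<Sum>k<Suc m. R' k j * q' k i) = (\<Sum>k<m. c k * q k i) + of_real N * (v i / of_real N)"
          using True by (simp add: R'_def q'_def)
        also have "\<dots> = g i m" using Npos by (simp add: v_def)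
        finally show ?thesis using True by simp
      next
        case False
        then have jm: "j < m" using j by simp
        have "(\<Sum>k<Suc m. R' k j * q' k i) = (\<Sum>k<m. R k j * q k i)"
          using False Rt jm by (simp add: R'_def q'_def)
        then show ?thesis using gR jm i by simp
      qed
    qed
    have h3: "\<forall>j<Suc m. \<forall>k. j < k \<longrightarrow> R' k j = 0"
      using Rt by (auto simp: R'_def)
    have h4: "\<forall>j<Suc m. \<forall>i<n. q' j i = (\<Sum>k<Suc m. S' k j * g i k)"
    proof (intro allI impI)
      fix j i assume j: "j < Suc m" and i: "i < n"
      show "q' j i = (\<Sum>k<Suc m. S' k j * g i k)"
      proof (cases "j = m")
        case True
        have "(\<Sum>k<Suc m. S' k j * g i k) = (\<Sum>k<m. - (\<Sum>k'<m. c k' * S k k') / of_real N * g i k) + g i m / of_real N"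
          using True by (simp add: S'_def)
        also have "(\<Sum>k<m. - (\<Sum>k'<m. c k' * S k k') / of_real N * g i k) = - (\<Sum>k'<m. c k' * (\<Sum>k<m. S k k' * g i k)) / of_real N"
        proof -
          have "(\<Sum>k<m. - (\<Sum>k'<m. c k' * S k k') / of_real N * g i k) = (\<Sum>k<m. - (\<Sum>k'<m. c k' * (S k k' * g i k)) / of_real N)"
            by (intro sum.cong refl) (simp add: sum_distrib_right sum_distrib_left ac_simps)
          also have "\<dots> = - (\<Sum>k<m. \<Sum>k'<m. c k' * (S k k' * g i k)) / of_real N"
            by (simp add: sum_divide_distrib sum_negf)
          also have "(\<Sum>k<m. \<Sum>k'<m. c k' * (S k k' * g i k)) = (\<Sum>k'<m. \<Sum>k<m. c k' * (S k k' * g i k))"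
            by (rule sum.swap)
          finally show ?thesis by (simp add: sum_distrib_left)
        qed
        also have "(\<Sum>k'<m. c k' * (\<Sum>k<m. S k k' * g i k)) = (\<Sum>k'<m. c k' * q k' i)"
          using qS i by simp
        finally have "(\<Sum>k<Suc m. S' k j * g i k) = v i / of_real N"
          by (simp add: v_def diff_divide_distrib)
        then show ?thesis using True by (simp add: q'_def)
      next
        case False
        then have jm: "j < m" using j by simp
        have "(\<Sum>k<Suc m. S' k j * g i k) = (\<Sum>k<m. S k j * g i k)"
          using False by (simp add: S'_def)
        then show ?thesis using qS jm i False by (simp add: q'_def)
      qed
    qed
    show ?thesis using h1 h2 h3 h4 by blast
  qed
qed




lemma pi_act_eU:
  "pi_act n g (e_U lam) = (\<Prod>l\<in>{1..ncols lam}. ldet (colh lam l) (\<lambda>a b. \<Sum>i<n. Var a i * Const (g i b)))"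
  by (simp add: pi_act_def e_U_def subst_prod subst_ldet)

lemma colh_le: "colh lam l \<le> length lam"
proof -
  have "{i. i < length lam \<and> l \<le> lam ! i} \<subseteq> {..<length lam}" by auto
  then show ?thesis unfolding colh_def using card_mono[of "{..<length lam}"] by fastforce
qed

lemma ldet_factor:
  assumes pn: "p \<le> n"
    and gR: "\<forall>j<n. \<forall>i<n. g i j = (\<Sum>k<n. R k j * q k i)"
    and Rt: "\<forall>j<n. \<forall>k. j < k \<longrightarrow> R k j = 0"
  shows "ldet p (\<lambda>a b. \<Sum>i<n. Var a i * Const (g i b)) =
         ldet p (\<lambda>a b. \<Sum>i<n. Var a i * Const (q b i)) * Const (ldet p R)"
proof -
  have "ldet p (\<lambda>a b. \<Sum>i<n. Var a i * Const (g i b)) =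
        ldet p (\<lambda>a b. \<Sum>k<p. (\<Sum>i<n. Var a i * Const (q k i)) * Const (R k b))"
  proof (rule ldet_cong)
    fix a b assume a: "a < p" and b: "b < p"
    have gi: "g i b = (\<Sum>k<p. R k b * q k i)" if i: "i < n" for i
    proof -
      have "g i b = (\<Sum>k<n. R k b * q k i)" using gR b pn i by simp
      also have "\<dots> = (\<Sum>k<p. R k b * q k i)"
        by (rule sum.mono_neutral_right) (use pn b Rt in auto)
      finally show ?thesis .
    qed
    have "(\<Sum>i<n. Var a i * Const (g i b)) = (\<Sum>i<n. \<Sum>k<p. Var a i * Const (q k i) * Const (R k b))"
      by (rule sum.cong) (simp_all add: gi Const_sum sum_distrib_left Const_mult ac_simps)
    also have "\<dots> = (\<Sum>k<p. \<Sum>i<n. Var a i * Const (q k i) * Const (R k b))"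
      by (rule sum.swap)
    also have "\<dots> = (\<Sum>k<p. (\<Sum>i<n. Var a i * Const (q k i)) * Const (R k b))"
      by (simp add: sum_distrib_right)
    finally show "(\<Sum>i<n. Var a i * Const (g i b)) = (\<Sum>k<p. (\<Sum>i<n. Var a i * Const (q k i)) * Const (R k b))" .
  qed
  also have "\<dots> = ldet p (\<lambda>a b. \<Sum>i<n. Var a i * Const (q b i)) * ldet p (\<lambda>k b. Const (R k b))"
    by (rule ldet_mult)
  also have "\<dots> = ldet p (\<lambda>a b. \<Sum>i<n. Var a i * Const (q b i)) * Const (ldet p R)"
    by (simp add: ldet_Const)
  finally show ?thesis .
qed

lemma vars_of_int[simp]: "vars (of_int k) = {}"
  by (metis Const_of_int vars_Const)

lemma homog_ldet_Var: "homog p (ldet p (\<lambda>a b. Var a b))"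
  unfolding ldet_def
proof (rule homog_sum)
  fix \<sigma> assume "\<sigma> \<in> {\<sigma>. \<sigma> permutes {0..<p}}"
  have "homog (\<Sum>a<p. 1) (\<Prod>a<p. Var a (\<sigma> a))" by (rule homog_prod) (rule homog_Var)
  then show "homog p (of_int (sign \<sigma>) * (\<Prod>a<p. Var a (\<sigma> a)))"
    using homog_Const_mult[of p _ "of_int (sign \<sigma>)"] by (simp add: Const_of_int)
qed

lemma vars_ldet_Var: assumes "p \<le> n" shows "vars (ldet p (\<lambda>a b. Var a b)) \<subseteq> {..<n} \<times> {..<n}"
  unfolding ldet_def
proof (rule vars_sum)
  fix \<sigma> assume s: "\<sigma> \<in> {\<sigma>. \<sigma> permutes {0..<p}}"
  have "vars (\<Prod>a<p. Var a (\<sigma> a)) \<subseteq> {..<n} \<times> {..<n}"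
  proof (rule vars_prod)
    fix a assume "a \<in> {..<p}"
    moreover have "\<sigma> a \<in> {0..<p}" using permutes_in_image[of \<sigma> "{0..<p}" a] s \<open>a \<in> {..<p}\<close> by auto
    ultimately have "a < n" "\<sigma> a < n" using assms by auto
    then show "vars (Var a (\<sigma> a)) \<subseteq> {..<n} \<times> {..<n}" by (simp add: vars_Var)
  qed
  then show "vars (of_int (sign \<sigma>) * (\<Prod>a<p. Var a (\<sigma> a))) \<subseteq> {..<n} \<times> {..<n}"
    using vars_mult[of "of_int (sign \<sigma>)" "\<Prod>a<p. Var a (\<sigma> a)"] by auto
qed

lemma eU_props:
  assumes "length lam \<le> n"
  shows "homog (\<Sum>l\<in>{1..ncols lam}. colh lam l) (e_U lam)" "vars (e_U lam) \<subseteq> {..<n} \<times> {..<n}"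
proof -
  show "homog (\<Sum>l\<in>{1..ncols lam}. colh lam l) (e_U lam)"
    unfolding e_U_def by (rule homog_prod) (rule homog_ldet_Var)
  show "vars (e_U lam) \<subseteq> {..<n} \<times> {..<n}"
    unfolding e_U_def
    by (rule vars_prod, rule vars_ldet_Var) (use colh_le assms order.trans in blast)
qed

lemma norm_sq_Const_mult: "norm_sq (Const c * P) = (cmod c)\<^sup>2 * norm_sq P"
proof -
  have "ip (Const c * P) (Const c * P) = (c * cnj c) * ip P P"
    by (simp add: ip_Const_left ip_Const_right mult.assoc)
  also have "c * cnj c = complex_of_real ((cmod c)\<^sup>2)" by (rule complex_norm_square[symmetric])
  finally have "ip (Const c * P) (Const c * P) = complex_of_real ((cmod c)\<^sup>2) * ip P P" .
  then show ?thesis by (simp add: norm_sq_ip)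
qed

lemma norm_sq_nonneg: "0 \<le> norm_sq P"
  unfolding norm_sq_def by (intro sum_nonneg mult_nonneg_nonneg prod_nonneg) auto

lemma unitary_eU:
  assumes o: "\<forall>k<n. \<forall>k'<n. cip n (q k) (q k') = (if k = k' then 1 else 0)"
    and len: "length lam \<le> n"
  shows "norm_sq (pi_act n (\<lambda>i j. q j i) (e_U lam)) = norm_sq (e_U lam)"
proof -
  let ?X = "{..<n} \<times> {..<n}"
  define U where "U y x = (if fst y = fst x then q (snd x) (snd y) else 0)" for y x :: "nat \<times> nat"
  let ?\<tau> = "\<lambda>(a, j). \<Sum>i<n. Var a i * Const (q j i)"
  have tau: "?\<tau> x = (\<Sum>y\<in>?X. Const (U y x) * Var (fst y) (snd y))" if x: "x \<in> ?X" for x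
  proof -
    obtain a j where xa: "x = (a, j)" by fastforce
    have "(\<Sum>y\<in>?X. Const (U y x) * Var (fst y) (snd y)) =
          (\<Sum>a'<n. \<Sum>i<n. Const (U (a', i) x) * Var a' i)"
      by (simp add: sum.cartesian_product split_def)
    also have "\<dots> = (\<Sum>a'<n. if a' = a then (\<Sum>i<n. Const (q j i) * Var a i) else 0)"
      by (rule sum.cong) (auto simp: U_def xa)
    also have "\<dots> = (\<Sum>i<n. Const (q j i) * Var a i)" using x xa by simp
    finally show ?thesis by (simp add: xa mult.commute)
  qed
  have orth: "(\<Sum>y\<in>?X. U y x * cnj (U y x')) = (if x = x' then 1 else 0)"
    if x: "x \<in> ?X" and x': "x' \<in> ?X" for x x'
  proof -
    obtain a j where xa: "x = (a, j)" by fastforce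
    obtain a' j' where xa': "x' = (a', j')" by fastforce
    have "(\<Sum>y\<in>?X. U y x * cnj (U y x')) = (\<Sum>a''<n. \<Sum>i<n. U (a'', i) x * cnj (U (a'', i) x'))"
      by (simp add: sum.cartesian_product split_def)
    also have "\<dots> = (\<Sum>a''<n. if a'' = a \<and> a'' = a' then cip n (q j) (q j') else 0)"
      by (rule sum.cong) (auto simp: U_def xa xa' cip_def intro!: sum.neutral)
    also have "\<dots> = (if a = a' then cip n (q j) (q j') else 0)"
      using x by (auto simp: xa intro!: sum.neutral)
    also have "\<dots> = (if x = x' then 1 else 0)" using o x x' xa xa' by auto
    finally show ?thesis .
  qed
  have "ip (subst ?\<tau> (e_U lam)) (subst ?\<tau> (e_U lam)) = ip (e_U lam) (e_U lam)"
    by (rule unitary_inv[where X = ?X and U = U]) (use tau orth eU_props[OF len] in auto)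
  then show ?thesis by (simp add: norm_sq_ip pi_act_def)
qed

lemma gstar_block:
  assumes o: "\<forall>k<n. \<forall>k'<n. cip n (q k) (q k') = (if k = k' then 1 else 0)"
    and gR: "\<forall>j<n. \<forall>i<n. g i j = (\<Sum>k<n. R k j * q k i)"
    and Rt: "\<forall>j<n. \<forall>k. j < k \<longrightarrow> R k j = 0"
    and pn: "p \<le> n" and i: "i < p" and j: "j < p"
  shows "gstar_g n g i j = (\<Sum>a<p. cnj (R a i) * R a j)"
proof -
  have "gstar_g n g i j = (\<Sum>k<n. (\<Sum>a<n. cnj (R a i) * cnj (q a k)) * (\<Sum>b<n. R b j * q b k))"
    unfolding gstar_g_def using gR i j pn by (intro sum.cong refl) (simp add: cnj_sum)
  also have "\<dots> = (\<Sum>k<n. \<Sum>a<n. \<Sum>b<n. cnj (R a i) * R b j * (q b k * cnj (q a k)))"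
    unfolding sum_product by (intro sum.cong refl) (simp add: ac_simps)
  also have "\<dots> = (\<Sum>a<n. \<Sum>k<n. \<Sum>b<n. cnj (R a i) * R b j * (q b k * cnj (q a k)))"
    by (rule sum.swap)
  also have "\<dots> = (\<Sum>a<n. \<Sum>b<n. \<Sum>k<n. cnj (R a i) * R b j * (q b k * cnj (q a k)))"
    by (rule sum.cong[OF refl], rule sum.swap)
  also have "\<dots> = (\<Sum>a<n. \<Sum>b<n. cnj (R a i) * R b j * cip n (q b) (q a))"
    by (simp add: cip_def sum_distrib_left)
  also have "\<dots> = (\<Sum>a<n. \<Sum>b<n. if b = a then cnj (R a i) * R a j else 0)"
    using o by (intro sum.cong refl) auto
  also have "\<dots> = (\<Sum>a<n. cnj (R a i) * R a j)" by simp
  also have "\<dots> = (\<Sum>a<p. cnj (R a i) * R a j)"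
    by (rule sum.mono_neutral_right) (use pn i j Rt in auto)
  finally show ?thesis .
qed

lemma lead_minor_R:
  assumes o: "\<forall>k<n. \<forall>k'<n. cip n (q k) (q k') = (if k = k' then 1 else 0)"
    and gR: "\<forall>j<n. \<forall>i<n. g i j = (\<Sum>k<n. R k j * q k i)"
    and Rt: "\<forall>j<n. \<forall>k. j < k \<longrightarrow> R k j = 0"
    and pn: "p \<le> n"
  shows "lead_minor p (gstar_g n g) = cnj (ldet p R) * ldet p R"
proof -
  have "lead_minor p (gstar_g n g) = ldet p (\<lambda>i j. \<Sum>a<p. cnj (R a i) * R a j)"
    unfolding lead_minor_def by (rule ldet_cong) (rule gstar_block[OF o gR Rt pn])
  also have "\<dots> = ldet p (\<lambda>i a. cnj (R a i)) * ldet p R" by (rule ldet_mult)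
  also have "ldet p (\<lambda>i a. cnj (R a i)) = cnj (ldet p R)"
    using ldet_cnj[of p "\<lambda>i a. R a i"] ldet_transpose[of p R] by simp
  finally show ?thesis .
qed




theorem mainTheorem2:
  fixes K :: "complex set" and n :: nat and lam :: "nat list"
    and g :: "nat \<Rightarrow> nat \<Rightarrow> complex"
  assumes "is_number_field K"
    and "is_partition lam" and "length lam \<le> n"
    and "\<forall>i<n. \<forall>j<n. g i j \<in> K"
    and "ldet n g \<noteq> 0"
  shows "H_v n lam (place_degree K) (pi_act n g (e_U lam))
         = (Re (\<Prod>l\<in>{1..ncols lam}. lead_minor (colh lam l) (gstar_g n g)))
             powr (real (place_degree K) / 2)
           * H_v n lam (place_degree K) (e_U lam)"
proof -
  obtain q R S where
    o: "\<forall>k<n. \<forall>k'<n. cip n (q k) (q k') = (if k = k' then 1 else 0)" and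
    gR: "\<forall>j<n. \<forall>i<n. g i j = (\<Sum>k<n. R k j * q k i)" and
    Rt: "\<forall>j<n. \<forall>k. j < k \<longrightarrow> R k j = 0"
    using gs_exists[OF assms(5) order.refl] by blast
  let ?L = "{1..ncols lam}"
  let ?p = "colh lam"
  have pn: "?p l \<le> n" for l using colh_le[of lam l] assms(3) by linarith
  define C where "C = (\<Prod>l\<in>?L. ldet (?p l) R)"
  let ?Qm = "\<lambda>i j. q j i"
  have E1: "pi_act n g (e_U lam) = Const C * pi_act n ?Qm (e_U lam)"
  proof -
    have "pi_act n g (e_U lam) = (\<Prod>l\<in>?L. ldet (?p l) (\<lambda>a b. \<Sum>i<n. Var a i * Const (q b i)) * Const (ldet (?p l) R))"
      unfolding pi_act_eU by (rule prod.cong[OF refl], rule ldet_factor[OF pn gR Rt])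
    also have "\<dots> = (\<Prod>l\<in>?L. ldet (?p l) (\<lambda>a b. \<Sum>i<n. Var a i * Const (q b i))) * Const C"
      by (simp add: prod.distrib C_def Const_prod)
    also have "(\<Prod>l\<in>?L. ldet (?p l) (\<lambda>a b. \<Sum>i<n. Var a i * Const (q b i))) = pi_act n ?Qm (e_U lam)"
      by (simp add: pi_act_eU)
    finally show ?thesis by (simp add: mult.commute)
  qed
  have E2: "norm_sq (pi_act n g (e_U lam)) = (cmod C)\<^sup>2 * norm_sq (e_U lam)"
    unfolding E1 norm_sq_Const_mult unitary_eU[OF o assms(3)] ..
  have E3: "Re (\<Prod>l\<in>?L. lead_minor (?p l) (gstar_g n g)) = (cmod C)\<^sup>2"
  proof -
    have "(\<Prod>l\<in>?L. lead_minor (?p l) (gstar_g n g)) = (\<Prod>l\<in>?L. cnj (ldet (?p l) R) * ldet (?p l) R)"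
      by (rule prod.cong[OF refl], rule lead_minor_R[OF o gR Rt pn])
    also have "\<dots> = cnj C * C" by (simp add: C_def prod.distrib cnj_prod)
    also have "\<dots> = of_real ((cmod C)\<^sup>2)" using complex_norm_square[of C] by (simp add: mult.commute)
    finally show ?thesis by simp
  qed
  show ?thesis
    unfolding H_v_def E2 E3
    by (simp add: powr_mult norm_sq_nonneg)
qed


end
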